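(* Let $m\ge0$, let $f:\mathbb{R}^n\to\mathbb{R}$ be $m$-weakly convex, let $x\in\mathbb{R}^n$, $\rho>0$, $\alpha=m+\rho$, and $\Delta:=f(x)-f_\alpha(x)$. Let $\hat x=\arg\min_y\{f(y)+\frac\alpha2\|y-x\|^2\}$ and $w=\rho(x-\hat x)$. Then $w\in\partial_\Delta f(x)$ and $\|w\|\le\sqrt{2\rho\Delta}$; consequently $x$ is a $(\sqrt{2\rho\Delta},\Delta)$-inexact stationary point (i.e. $\mathrm{dist}(0,\partial_\Delta f(x))\le\sqrt{2\rho\Delta}$), and $x$ is a $(\sqrt{2\alpha^2\Delta/\rho},\alpha)$-Moreau stationary point.
   Context: A function $f$ is $m$-weakly convex ($m\ge 0$) if $x\mapsto f(x)+\frac{m}{2}\|x\|^2$ is convex. For $\epsilon\ge 0$, $\partial_\epsilon f(x)=\{v\in\mathbb{R}^n: f(y)\ge f(x)+\langle v,y-x\rangle-\frac{m}{2}\|y-x\|^2-\epsilon\ \ \forall y\}$. A point $x$ is an $(\eta,\epsilon)$-inexact stationary point if $\mathrm{dist}(0,\partial_\epsilon f(x))\le\eta$. For $\rho>m$ the Moreau envelope is $f_\rho(x)=\inf_{y}\{f(y)+\frac{\rho}{2}\|y-x\|^2\}$, continuously differentiable with $\nabla f_\rho(x)=\rho(x-\hat x)$; $x$ is a $(\delta,\alpha)$-Moreau stationary point if $\|\nabla f_\alpha(x)\|\le\delta$. *)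

theory Defs
  imports "HOL-Analysis.Analysis"
begin

definition weakly_convex :: "real \<Rightarrow> ('a::euclidean_space \<Rightarrow> real) \<Rightarrow> bool" where
  "weakly_convex m f \<longleftrightarrow> m \<ge> 0 \<and> convex_on UNIV (\<lambda>x. f x + m / 2 * (norm x)\<^sup>2)"

definition eps_subdiff :: "real \<Rightarrow> ('a::euclidean_space \<Rightarrow> real) \<Rightarrow> real \<Rightarrow> 'a \<Rightarrow> 'a set" where
  "eps_subdiff m f \<epsilon> x =
     {v. \<forall>y. f y \<ge> f x + inner v (y - x) - m / 2 * (norm (y - x))\<^sup>2 - \<epsilon>}"

definition inexact_stationary :: "real \<Rightarrow> ('a::euclidean_space \<Rightarrow> real) \<Rightarrow> real \<Rightarrow> real \<Rightarrow> 'a \<Rightarrow> bool" where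
  "inexact_stationary m f \<eta> \<epsilon> x \<longleftrightarrow> infdist 0 (eps_subdiff m f \<epsilon> x) \<le> \<eta>"

definition moreau_env :: "('a::euclidean_space \<Rightarrow> real) \<Rightarrow> real \<Rightarrow> 'a \<Rightarrow> real" where
  "moreau_env f \<rho> x = (INF y. f y + \<rho> / 2 * (norm (y - x))\<^sup>2)"

definition moreau_stationary :: "('a::euclidean_space \<Rightarrow> real) \<Rightarrow> real \<Rightarrow> real \<Rightarrow> 'a \<Rightarrow> bool" where
  "moreau_stationary f \<delta> \<alpha> x \<longleftrightarrow>
     (\<exists>g. (moreau_env f \<alpha> has_derivative (\<lambda>h. inner g h)) (at x) \<and> norm g \<le> \<delta>)"

end

theory Submission
  imports Defs
begin

lemma norm_comb_sq:
  fixes a b :: "'a::real_inner"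
  shows "(norm ((1 - t) *\<^sub>R a + t *\<^sub>R b))\<^sup>2 =
     (1 - t) * (norm a)\<^sup>2 + t * (norm b)\<^sup>2 - t * (1 - t) * (norm (a - b))\<^sup>2"
  unfolding power2_norm_eq_inner
  by (simp add: inner_add_left inner_add_right inner_diff_left inner_diff_right inner_commute algebra_simps power2_eq_square)

lemma norm_comb_sq':
  fixes a b c :: "'a::real_inner"
  shows "(norm ((1 - t) *\<^sub>R a + t *\<^sub>R b - c))\<^sup>2 =
     (1 - t) * (norm (a - c))\<^sup>2 + t * (norm (b - c))\<^sup>2 - t * (1 - t) * (norm (a - b))\<^sup>2"
proof -
  have "(1 - t) *\<^sub>R a + t *\<^sub>R b - c = (1 - t) *\<^sub>R (a - c) + t *\<^sub>R (b - c)"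
    by (simp add: algebra_simps)
  then show ?thesis using norm_comb_sq[of t "a - c" "b - c"] by simp
qed

lemma sq_expand:
  fixes u d :: "'a::real_inner"
  shows "(norm (u + d))\<^sup>2 = (norm u)\<^sup>2 + 2 * inner u d + (norm d)\<^sup>2"
  unfolding power2_norm_eq_inner
  by (simp add: inner_add_left inner_add_right inner_commute)

theorem mainTheorem9:
  fixes f :: "'a::euclidean_space \<Rightarrow> real" and m \<rho> \<alpha> \<Delta> :: real and x xh w :: 'a
  assumes "m \<ge> 0"
    and "weakly_convex m f"
    and "\<rho> > 0"
    and "\<alpha> = m + \<rho>"
    and "\<Delta> = f x - moreau_env f \<alpha> x"
    and "\<forall>y. f xh + \<alpha> / 2 * (norm (xh - x))\<^sup>2 \<le> f y + \<alpha> / 2 * (norm (y - x))\<^sup>2"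
    and "w = \<rho> *\<^sub>R (x - xh)"
  shows "w \<in> eps_subdiff m f \<Delta> x \<and> norm w \<le> sqrt (2 * \<rho> * \<Delta>)
         \<and> inexact_stationary m f (sqrt (2 * \<rho> * \<Delta>)) \<Delta> x
         \<and> moreau_stationary f (sqrt (2 * \<alpha>\<^sup>2 * \<Delta> / \<rho>)) \<alpha> x"
proof -
  define g where "g y = f y + \<alpha> / 2 * (norm (y - x))\<^sup>2" for y
  define \<phi> where "\<phi> y = f y + m / 2 * (norm y)\<^sup>2" for y
  define d where "d = x - xh"
  have cvx: "convex_on UNIV \<phi>" using assms(2) unfolding weakly_convex_def \<phi>_def by simp
  have gmin: "g xh \<le> g y" for y using assms(6) unfolding g_def by simp
  have strong: "g y \<ge> g xh + \<rho> / 2 * (norm (y - xh))\<^sup>2" for y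
  proof -
    define D where "D = (norm (y - xh))\<^sup>2"
    have step: "g y - g xh \<ge> (1 - t) * (\<rho> / 2 * D)" if t: "0 < t" "t < 1" for t
    proof -
      let ?z = "(1 - t) *\<^sub>R xh + t *\<^sub>R y"
      have c: "\<phi> ?z \<le> (1 - t) * \<phi> xh + t * \<phi> y"
        using convex_onD[OF cvx, of t xh y] t by simp
      have n1: "(norm (?z - x))\<^sup>2 = (1 - t) * (norm (xh - x))\<^sup>2 + t * (norm (y - x))\<^sup>2 - t * (1 - t) * D"
        using norm_comb_sq'[of t xh y x] unfolding D_def by (simp add: norm_minus_commute)
      have n2: "(norm ?z)\<^sup>2 = (1 - t) * (norm xh)\<^sup>2 + t * (norm y)\<^sup>2 - t * (1 - t) * D"
        using norm_comb_sq[of t xh y] unfolding D_def by (simp add: norm_minus_commute)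
      have gz: "g ?z = \<phi> ?z + \<alpha> / 2 * (norm (?z - x))\<^sup>2 - m / 2 * (norm ?z)\<^sup>2"
        unfolding g_def \<phi>_def by simp
      define A where "A = (norm (xh - x))\<^sup>2"
      define B where "B = (norm xh)\<^sup>2"
      define C where "C = (norm (y - x))\<^sup>2"
      define E where "E = (norm y)\<^sup>2"
      have gxh: "g xh = \<phi> xh + \<alpha> / 2 * A - m / 2 * B" unfolding g_def \<phi>_def A_def B_def by simp
      have gy: "g y = \<phi> y + \<alpha> / 2 * C - m / 2 * E" unfolding g_def \<phi>_def C_def E_def by simp
      have gz2: "g ?z = \<phi> ?z + \<alpha> / 2 * ((1 - t) * A + t * C - t * (1 - t) * D)
          - m / 2 * ((1 - t) * B + t * E - t * (1 - t) * D)"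
        using gz n1 n2 unfolding A_def B_def C_def E_def by simp
      have key: "\<alpha> / 2 * ((1 - t) * A + t * C - t * (1 - t) * D) - m / 2 * ((1 - t) * B + t * E - t * (1 - t) * D)
          = (1 - t) * (\<alpha> / 2 * A - m / 2 * B) + t * (\<alpha> / 2 * C - m / 2 * E) - t * (1 - t) * (\<rho> / 2 * D)"
        using assms(4) by (simp add: algebra_simps divide_simps)
      have "g xh \<le> g ?z" by (rule gmin)
      also have "\<dots> \<le> (1 - t) * g xh + t * g y - t * (1 - t) * (\<rho> / 2 * D)"
        unfolding gz2 gxh gy using c key by (simp add: algebra_simps)
      finally have "t * (g y - g xh) \<ge> t * ((1 - t) * (\<rho> / 2 * D))"
        by (simp add: algebra_simps)
      then show ?thesis using t by simp
    qed
    show ?thesis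
    proof (rule ccontr)
      assume "\<not> ?thesis"
      then have lt: "g y - g xh < \<rho> / 2 * D" unfolding D_def by simp
      define a where "a = g y - g xh"
      define b where "b = \<rho> / 2 * D"
      have a0: "a \<ge> 0" using gmin[of y] unfolding a_def by simp
      have b0: "b > 0" using lt a0 unfolding a_def b_def by simp
      define t where "t = (b - a) / (2 * b)"
      have t0: "0 < t" "t < 1" using lt a0 b0 unfolding t_def a_def b_def
        by (auto simp: field_simps)
      have "a \<ge> (1 - t) * b" using step[OF t0] unfolding a_def b_def by simp
      also have "(1 - t) * b = (a + b) / 2" unfolding t_def using b0 by (simp add: field_simps)
      finally show False using lt unfolding a_def b_def by simp
    qed
  qed
  have menv: "moreau_env f \<alpha> z = Inf (range (\<lambda>y. f y + \<alpha> / 2 * (norm (y - z))\<^sup>2))" for z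
    unfolding moreau_env_def by simp
  have Mx: "moreau_env f \<alpha> x = g xh"
    unfolding menv
  proof (rule cInf_eq_minimum)
    show "g xh \<in> range (\<lambda>y. f y + \<alpha> / 2 * (norm (y - x))\<^sup>2)" unfolding g_def by auto
    show "\<And>v. v \<in> range (\<lambda>y. f y + \<alpha> / 2 * (norm (y - x))\<^sup>2) \<Longrightarrow> g xh \<le> v"
      using gmin unfolding g_def by auto
  qed
  have Dl: "\<Delta> = f x - g xh" using assms(5) Mx by simp
  have Dge: "\<Delta> \<ge> \<rho> / 2 * (norm d)\<^sup>2"
    using strong[of x] unfolding Dl d_def g_def by (simp add: norm_minus_commute)
  have D0: "\<Delta> \<ge> 0" proof -
    have "\<rho> / 2 * (norm d)\<^sup>2 \<ge> 0" using assms(3) by simp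
    then show ?thesis using Dge by linarith
  qed
  have sub: "w \<in> eps_subdiff m f \<Delta> x"
    unfolding eps_subdiff_def
  proof (clarify)
    fix y
    have s: "f y \<ge> g xh + \<rho> / 2 * (norm (y - xh))\<^sup>2 - \<alpha> / 2 * (norm (y - x))\<^sup>2"
      using strong[of y] unfolding g_def by simp
    have e: "y - xh = (y - x) + d" unfolding d_def by simp
    have ex: "(norm (y - xh))\<^sup>2 = (norm (y - x))\<^sup>2 + 2 * inner (y - x) d + (norm d)\<^sup>2"
      unfolding e by (rule sq_expand)
    have "inner w (y - x) = \<rho> * inner (y - x) d" unfolding assms(7) d_def by (simp add: inner_commute)
    moreover have "\<rho> * (norm d)\<^sup>2 \<ge> 0" using assms(3) by simp
    ultimately show "f x + inner w (y - x) - m / 2 * (norm (y - x))\<^sup>2 - \<Delta> \<le> f y"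
    proof -
      have id: "\<rho> / 2 * ((norm (y - x))\<^sup>2 + 2 * inner (y - x) d + (norm d)\<^sup>2) - (m + \<rho>) / 2 * (norm (y - x))\<^sup>2
        = \<rho> * inner (y - x) d + \<rho> / 2 * (norm d)\<^sup>2 - m / 2 * (norm (y - x))\<^sup>2"
        by (simp add: algebra_simps)
      have "g xh + \<rho> * inner (y - x) d + \<rho> / 2 * (norm d)\<^sup>2 - m / 2 * (norm (y - x))\<^sup>2 \<le> f y"
        using s unfolding ex assms(4) using id by linarith
      then show ?thesis using \<open>inner w (y - x) = \<rho> * inner (y - x) d\<close> \<open>\<rho> * (norm d)\<^sup>2 \<ge> 0\<close> unfolding Dl by linarith
    qed
  qed
  have nw: "norm w \<le> sqrt (2 * \<rho> * \<Delta>)"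
  proof -
    have "(norm w)\<^sup>2 = \<rho>\<^sup>2 * (norm d)\<^sup>2" unfolding assms(7) d_def using assms(3)
      by (simp add: power_mult_distrib)
    also have "\<dots> = (2 * \<rho>) * (\<rho> / 2 * (norm d)\<^sup>2)" by (simp add: power2_eq_square)
    also have "\<dots> \<le> (2 * \<rho>) * \<Delta>" using mult_left_mono[OF Dge, of "2 * \<rho>"] assms(3) by simp
    finally show ?thesis by (rule real_le_rsqrt)
  qed
  have inex: "inexact_stationary m f (sqrt (2 * \<rho> * \<Delta>)) \<Delta> x"
    unfolding inexact_stationary_def using infdist_le[OF sub, of 0] nw by simp
  define K where "K = \<alpha> / 2 + \<alpha>\<^sup>2 / (2 * \<rho>)"
  have K0: "K > 0" unfolding K_def using assms(1,3,4) by (simp add: add_pos_nonneg)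
  have ub: "moreau_env f \<alpha> (x + e) \<le> g xh + \<alpha> * inner d e + \<alpha> / 2 * (norm e)\<^sup>2"
    and lb: "moreau_env f \<alpha> (x + e) \<ge> g xh + \<alpha> * inner d e - (\<alpha>\<^sup>2 / (2 * \<rho>)) * (norm e)\<^sup>2" for e
  proof -
    have low: "f y + \<alpha> / 2 * (norm (y - (x + e)))\<^sup>2 \<ge> g xh + \<alpha> * inner d e - (\<alpha>\<^sup>2 / (2 * \<rho>)) * (norm e)\<^sup>2" for y
    proof -
      have s: "f y \<ge> g xh + \<rho> / 2 * (norm (y - xh))\<^sup>2 - \<alpha> / 2 * (norm (y - x))\<^sup>2"
        using strong[of y] unfolding g_def by simp
      define v where "v = y - xh"
      have e1: "y - x = v + (- d)" unfolding v_def d_def by simp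
      have e2: "y - (x + e) = (v + (- d)) + (- e)" unfolding v_def d_def by simp
      have x1: "(norm (y - x))\<^sup>2 = (norm v)\<^sup>2 - 2 * inner v d + (norm d)\<^sup>2"
        unfolding e1 sq_expand by simp
      have x2: "(norm (y - (x + e)))\<^sup>2 = (norm (y - x))\<^sup>2 - 2 * inner (v + (- d)) e + (norm e)\<^sup>2"
        unfolding e2 sq_expand e1 by simp
      have q: "\<rho> / 2 * (norm v)\<^sup>2 - \<alpha> * inner v e \<ge> - (\<alpha>\<^sup>2 / (2 * \<rho>)) * (norm e)\<^sup>2"
      proof -
        have "0 \<le> (norm (\<rho> *\<^sub>R v - \<alpha> *\<^sub>R e))\<^sup>2" by simp
        also have "\<dots> = \<rho>\<^sup>2 * (norm v)\<^sup>2 - 2 * \<rho> * \<alpha> * inner v e + \<alpha>\<^sup>2 * (norm e)\<^sup>2"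
          unfolding power2_norm_eq_inner
          by (simp add: inner_diff_left inner_diff_right inner_commute power2_eq_square algebra_simps)
        finally have "0 \<le> \<rho>\<^sup>2 * (norm v)\<^sup>2 - 2 * \<rho> * \<alpha> * inner v e + \<alpha>\<^sup>2 * (norm e)\<^sup>2" .
        then have "0 \<le> (\<rho>\<^sup>2 * (norm v)\<^sup>2 - 2 * \<rho> * \<alpha> * inner v e + \<alpha>\<^sup>2 * (norm e)\<^sup>2) / (2 * \<rho>)"
          using assms(3) by simp
        then show ?thesis using assms(3) by (simp add: field_simps power2_eq_square)
      qed
      have x2': "(norm (y - (x + e)))\<^sup>2 = (norm (y - x))\<^sup>2 - 2 * inner v e + 2 * inner d e + (norm e)\<^sup>2"
        using x2 by (simp add: inner_add_left inner_diff_left inner_diff_right inner_commute)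
      have x3: "\<alpha> / 2 * (norm (y - (x + e)))\<^sup>2 = \<alpha> / 2 * (norm (y - x))\<^sup>2 - \<alpha> * inner v e + \<alpha> * inner d e + \<alpha> / 2 * (norm e)\<^sup>2"
        unfolding x2' by (simp add: algebra_simps)
      have a0: "\<alpha> / 2 * (norm e)\<^sup>2 \<ge> 0" using assms(1,3,4) by simp
      show ?thesis using s q x3 a0 unfolding v_def by linarith
    qed
    have bdd: "bdd_below (range (\<lambda>y. f y + \<alpha> / 2 * (norm (y - (x + e)))\<^sup>2))"
      using low by (intro bdd_belowI2) 
    show "moreau_env f \<alpha> (x + e) \<ge> g xh + \<alpha> * inner d e - (\<alpha>\<^sup>2 / (2 * \<rho>)) * (norm e)\<^sup>2"
      unfolding menv using low by (intro cINF_greatest) auto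
    have "moreau_env f \<alpha> (x + e) \<le> f xh + \<alpha> / 2 * (norm (xh - (x + e)))\<^sup>2"
      unfolding menv using bdd by (rule cINF_lower) simp
    also have "xh - (x + e) = (- d) + (- e)" unfolding d_def by simp
    also have "(norm ((- d) + (- e)))\<^sup>2 = (norm d)\<^sup>2 + 2 * inner d e + (norm e)\<^sup>2"
      unfolding sq_expand by simp
    finally show "moreau_env f \<alpha> (x + e) \<le> g xh + \<alpha> * inner d e + \<alpha> / 2 * (norm e)\<^sup>2"
      unfolding g_def d_def by (simp add: norm_minus_commute algebra_simps)
  qed
  have bound: "\<bar>moreau_env f \<alpha> (x + e) - moreau_env f \<alpha> x - inner (\<alpha> *\<^sub>R d) e\<bar> \<le> K * (norm e)\<^sup>2" for e
  proof -
    have "\<alpha> / 2 * (norm e)\<^sup>2 \<le> K * (norm e)\<^sup>2" "\<alpha>\<^sup>2 / (2 * \<rho>) * (norm e)\<^sup>2 \<le> K * (norm e)\<^sup>2"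
    proof -
      have p1: "\<alpha> / 2 \<ge> 0" "\<alpha>\<^sup>2 / (2 * \<rho>) \<ge> 0" using assms(1,3,4) by auto
      have "\<alpha> / 2 \<le> K" "\<alpha>\<^sup>2 / (2 * \<rho>) \<le> K" unfolding K_def using p1 by linarith+
      then show "\<alpha> / 2 * (norm e)\<^sup>2 \<le> K * (norm e)\<^sup>2" "\<alpha>\<^sup>2 / (2 * \<rho>) * (norm e)\<^sup>2 \<le> K * (norm e)\<^sup>2"
        by (simp_all add: mult_right_mono del: times_divide_eq_left)
    qed
    then show ?thesis using ub[of e] lb[of e] unfolding Mx by (simp add: abs_le_iff)
  qed
  have deriv: "(moreau_env f \<alpha> has_derivative (\<lambda>h. inner (\<alpha> *\<^sub>R d) h)) (at x)"
    unfolding has_derivative_at'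
  proof (intro conjI allI impI)
    show "bounded_linear (inner (\<alpha> *\<^sub>R d))" by (rule bounded_linear_inner_right)
    fix \<epsilon> :: real assume e: "\<epsilon> > 0"
    show "\<exists>\<delta>>0. \<forall>x'. 0 < norm (x' - x) \<and> norm (x' - x) < \<delta> \<longrightarrow>
      norm (moreau_env f \<alpha> x' - moreau_env f \<alpha> x - inner (\<alpha> *\<^sub>R d) (x' - x)) / norm (x' - x) < \<epsilon>"
    proof (intro exI[of _ "\<epsilon> / K"] conjI allI impI)
      show "\<epsilon> / K > 0" using e K0 by simp
      fix x' assume h: "0 < norm (x' - x) \<and> norm (x' - x) < \<epsilon> / K"
      have b: "\<bar>moreau_env f \<alpha> x' - moreau_env f \<alpha> x - inner (\<alpha> *\<^sub>R d) (x' - x)\<bar> \<le> K * (norm (x' - x))\<^sup>2"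
        using bound[of "x' - x"] by simp
      have "K * (norm (x' - x))\<^sup>2 / norm (x' - x) = K * norm (x' - x)"
        using h by (simp add: power2_eq_square)
      also have "\<dots> < \<epsilon>" using h K0 by (simp add: field_simps)
      finally have "K * (norm (x' - x))\<^sup>2 / norm (x' - x) < \<epsilon>" .
      then show "norm (moreau_env f \<alpha> x' - moreau_env f \<alpha> x - inner (\<alpha> *\<^sub>R d) (x' - x)) / norm (x' - x) < \<epsilon>"
        using b h by (smt (verit) divide_right_mono real_norm_def norm_ge_zero)
    qed
  qed
  have ng: "norm (\<alpha> *\<^sub>R d) \<le> sqrt (2 * \<alpha>\<^sup>2 * \<Delta> / \<rho>)"
  proof -
    have a0: "\<alpha> \<ge> 0" using assms(1,3,4) by simp
    have "(norm d)\<^sup>2 \<le> 2 * \<Delta> / \<rho>" using Dge assms(3) by (simp add: field_simps)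
    then have "\<alpha>\<^sup>2 * (norm d)\<^sup>2 \<le> \<alpha>\<^sup>2 * (2 * \<Delta> / \<rho>)" using mult_left_mono[of "(norm d)\<^sup>2" "2 * \<Delta> / \<rho>" "\<alpha>\<^sup>2"] by simp
    then have "(norm (\<alpha> *\<^sub>R d))\<^sup>2 \<le> 2 * \<alpha>\<^sup>2 * \<Delta> / \<rho>"
      using a0 by (simp add: power_mult_distrib mult.assoc mult.left_commute)
    then show ?thesis by (rule real_le_rsqrt)
  qed
  have ms: "moreau_stationary f (sqrt (2 * \<alpha>\<^sup>2 * \<Delta> / \<rho>)) \<alpha> x"
    unfolding moreau_stationary_def using deriv ng by blast
  show ?thesis using sub nw inex ms by blast
qed

end
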